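(* For every $v\in\{0,\dots,n-1\}$, every $\pi\in\Pi$ and every $f\in\mathcal F$, $$\sum_{e\in\mathcal E_v^+}\sigma_e H_e(f,\pi)\le -V^+_v(f,\pi)+V^-_v(f,\pi).$$
   Context: $\mathcal G=(\mathcal V,\mathcal E)$ is a finite directed graph with $\mathcal V=\{0,1,\dots,n\}$, containing no directed cycle, in which node $0$ is the unique node with no incoming link, node $n$ is the unique node with no outgoing link, there is a directed path from every node to $n$, and every link $(u,v)\in\mathcal E$ satisfies $u<v$. For $v\in\mathcal V$, $\mathcal E_v^-$ and $\mathcal E_v^+$ are the sets of links entering and leaving $v$. Each link $e$ has a capacity $C_e\in(0,+\infty]$; $\mathcal F_v:=\prod_{e\in\mathcal E_v^+}[0,C_e)$, $\mathcal F:=\prod_{e\in\mathcal E}[0,C_e)$. $\mathcal P$ is the set of directed paths from $0$ to $n$, $A$ the link-path incidence matrix ($A_{ep}=1$ iff $e\in p$), $\mathcal S(\cdot)$ denotes a probability simplex, $\Pi:=\{\pi\in\mathcal S(\mathcal P):(A\pi)_e<C_e\ \forall e\}$, and $f^\pi:=A\pi$. For each $v\in\{0,\dots,n-1\}$ a continuously differentiable $G^v:\mathcal F_v\times\Pi\to\mathcal S(\mathcal E_v^+)$ is given such that (consistency) $(\sum_{j\in\mathcal E_v^+}f^\pi_j)\,G^v_e(f^\pi_{\mathcal E_v^+},\pi)=f^\pi_e$ for all $\pi\in\Pi$, $e\in\mathcal E_v^+$, where $f^\pi_{\mathcal E_v^+}=(f^\pi_j)_{j\in\mathcal E_v^+}$;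 and (cooperativity) $\partial G^v_j(f_{\mathcal E_v^+},\pi)/\partial f_e\ge0$ for all $\pi\in\Pi$, $f_{\mathcal E_v^+}\in\mathcal F_v$, $j\neq e\in\mathcal E_v^+$. For $f\in\mathcal F$, $\pi\in\Pi$, $e\in\mathcal E_v^+$: $H_e(f,\pi):=G^v_e(f_{\mathcal E_v^+},\pi)-f_e$ if $v=0$, and $H_e(f,\pi):=(\sum_{j\in\mathcal E_v^-}f_j)G^v_e(f_{\mathcal E_v^+},\pi)-f_e$ if $1\le v<n$. Notation: $\sigma_e:=\mathrm{sgn}(f_e-f^\pi_e)$ with $\mathrm{sgn}(0)=0$; $\lambda^\pi_v:=\sum_{e\in\mathcal E_v^+}f^\pi_e$; $\lambda^-_v:=\sum_{e\in\mathcal E_v^-}f_e$; $V^+_v(f,\pi):=\sum_{e\in\mathcal E_v^+}|f_e-f^\pi_e|$; $V^-_v(f,\pi):=|\lambda^\pi_v-\lambda^-_v|$ for $1\le v\le n$ and $V^-_0(f,\pi):=0$. *)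

theory Defs
  imports "HOL-Analysis.Analysis"
begin

type_synonym link = "nat \<times> nat"
type_synonym path = "link list"

definition out_links :: "link set \<Rightarrow> nat \<Rightarrow> link set" where
  "out_links E v = {e \<in> E. fst e = v}"

definition in_links :: "link set \<Rightarrow> nat \<Rightarrow> link set" where
  "in_links E v = {e \<in> E. snd e = v}"

definition is_path :: "link set \<Rightarrow> nat \<Rightarrow> path \<Rightarrow> bool" where
  "is_path E n p \<longleftrightarrow> p \<noteq> [] \<and> set p \<subseteq> E \<and> fst (hd p) = 0 \<and> snd (last p) = n \<and>
     (\<forall>i. Suc i < length p \<longrightarrow> snd (p ! i) = fst (p ! Suc i))"

definition paths :: "link set \<Rightarrow> nat \<Rightarrow> path set" where
  "paths E n = {p. is_path E n p}"

definition fpi :: "link set \<Rightarrow> nat \<Rightarrow> (path \<Rightarrow> real) \<Rightarrow> link \<Rightarrow> real" where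
  "fpi E n \<pi> e = (\<Sum>p\<in>{p \<in> paths E n. e \<in> set p}. \<pi> p)"

definition Pi_set :: "link set \<Rightarrow> nat \<Rightarrow> (link \<Rightarrow> ereal) \<Rightarrow> (path \<Rightarrow> real) set" where
  "Pi_set E n C = {\<pi>. (\<forall>p. p \<notin> paths E n \<longrightarrow> \<pi> p = 0) \<and> (\<forall>p\<in>paths E n. 0 \<le> \<pi> p) \<and>
      sum \<pi> (paths E n) = 1 \<and> (\<forall>e\<in>E. ereal (fpi E n \<pi> e) < C e)}"

definition flows_on :: "link set \<Rightarrow> (link \<Rightarrow> ereal) \<Rightarrow> (link \<Rightarrow> real) set" where
  "flows_on L C = {f. (\<forall>e. e \<notin> L \<longrightarrow> f e = 0) \<and> (\<forall>e\<in>L. 0 \<le> f e \<and> ereal (f e) < C e)}"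

definition F_set :: "link set \<Rightarrow> (link \<Rightarrow> ereal) \<Rightarrow> (link \<Rightarrow> real) set" where
  "F_set E C = {f. \<forall>e\<in>E. 0 \<le> f e \<and> ereal (f e) < C e}"

definition restr :: "link set \<Rightarrow> (link \<Rightarrow> real) \<Rightarrow> link \<Rightarrow> real" where
  "restr L f = (\<lambda>e. if e \<in> L then f e else 0)"

text \<open>Continuous differentiability of a real function of finitely many real coordinates
  (indexed by I) on a set S of points that vanish outside I.\<close>
definition C1_on :: "'i set \<Rightarrow> ('i \<Rightarrow> real) set \<Rightarrow> (('i \<Rightarrow> real) \<Rightarrow> real) \<Rightarrow> bool" where
  "C1_on I S g \<longleftrightarrow> (\<exists>D. (\<forall>i\<in>I. continuous_on S (D i)) \<and>
     (\<forall>x\<in>S. ((\<lambda>y. (g y - g x - (\<Sum>i\<in>I. D i x * (y i - x i))) / (\<Sum>i\<in>I. \<bar>y i - x i\<bar>))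
              \<longlongrightarrow> 0) (at x within S)))"

definition H :: "link set \<Rightarrow> (nat \<Rightarrow> (link \<Rightarrow> real) \<Rightarrow> (path \<Rightarrow> real) \<Rightarrow> link \<Rightarrow> real)
    \<Rightarrow> (link \<Rightarrow> real) \<Rightarrow> (path \<Rightarrow> real) \<Rightarrow> link \<Rightarrow> real" where
  "H E G f \<pi> e = (let v = fst e in
     if v = 0 then G v (restr (out_links E v) f) \<pi> e - f e
     else (\<Sum>j\<in>in_links E v. f j) * G v (restr (out_links E v) f) \<pi> e - f e)"

definition Vplus :: "link set \<Rightarrow> nat \<Rightarrow> nat \<Rightarrow> (link \<Rightarrow> real) \<Rightarrow> (path \<Rightarrow> real) \<Rightarrow> real" where
  "Vplus E n v f \<pi> = (\<Sum>e\<in>out_links E v. \<bar>f e - fpi E n \<pi> e\<bar>)"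

definition Vminus :: "link set \<Rightarrow> nat \<Rightarrow> nat \<Rightarrow> (link \<Rightarrow> real) \<Rightarrow> (path \<Rightarrow> real) \<Rightarrow> real" where
  "Vminus E n v f \<pi> = (if v = 0 then 0 else
     \<bar>(\<Sum>e\<in>out_links E v. fpi E n \<pi> e) - (\<Sum>e\<in>in_links E v. f e)\<bar>)"

end

theory Submission
  imports Defs
begin

lemma line_tendsto:
  fixes z :: "'i \<Rightarrow> real"
  shows "((\<lambda>t. z(i:=t)) \<longlongrightarrow> z(i := t0)) (at t0 within T)"
proof -
  have "continuous_on UNIV (\<lambda>t::real. z(i:=t))"
  proof (rule continuous_on_coordinatewise_then_product)
    fix k show "continuous_on UNIV (\<lambda>t::real. (z(i:=t)) k)"
      by (cases "k = i") (auto intro: continuous_intros)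
  qed
  then show ?thesis
    by (meson UNIV_I continuous_on_def tendsto_within_subset top_greatest)
qed

lemma C1_line_deriv:
  fixes g :: "('i \<Rightarrow> real) \<Rightarrow> real"
  assumes C1: "\<exists>D. (\<forall>i\<in>I. continuous_on S (D i)) \<and>
     (\<forall>x\<in>S. ((\<lambda>y. (g y - g x - (\<Sum>i\<in>I. D i x * (y i - x i))) / (\<Sum>i\<in>I. \<bar>y i - x i\<bar>))
              \<longlongrightarrow> 0) (at x within S))"
    and fin: "finite I" and zS: "z \<in> S" and iI: "i \<in> I"
    and TS: "\<forall>t\<in>T. z(i:=t) \<in> S"
  shows "\<exists>c. ((\<lambda>t. g (z(i:=t))) has_real_derivative c) (at (z i) within T)"
proof -
  obtain D where L: "((\<lambda>y. (g y - g z - (\<Sum>k\<in>I. D k z * (y k - z k))) / (\<Sum>k\<in>I. \<bar>y k - z k\<bar>))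
              \<longlongrightarrow> 0) (at z within S)" using C1 zS by blast
  define c where "c = D i z"
  have filt: "filterlim (\<lambda>t. z(i:=t)) (at z within S) (at (z i) within T)"
    unfolding filterlim_at
  proof
    show "\<forall>\<^sub>F t in at (z i) within T. z(i := t) \<in> S \<and> z(i := t) \<noteq> z"
      unfolding eventually_at_filter using TS
      by (auto intro!: always_eventually dest: fun_cong[where x=i])
    show "((\<lambda>t. z(i:=t)) \<longlongrightarrow> z) (at (z i) within T)"
      using line_tendsto[of z i "z i" T] by simp
  qed
  have s1: "(\<Sum>k\<in>I. D k z * ((z(i:=t)) k - z k)) = c * (t - z i)" for t
  proof -
    have "(\<Sum>k\<in>I. D k z * ((z(i:=t)) k - z k)) = (\<Sum>k\<in>I. if k = i then c * (t - z i) else 0)"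
      by (rule sum.cong) (auto simp: c_def)
    then show ?thesis using fin iI by simp
  qed
  have s2: "(\<Sum>k\<in>I. \<bar>(z(i:=t)) k - z k\<bar>) = \<bar>t - z i\<bar>" for t
  proof -
    have "(\<Sum>k\<in>I. \<bar>(z(i:=t)) k - z k\<bar>) = (\<Sum>k\<in>I. if k = i then \<bar>t - z i\<bar> else 0)"
      by (rule sum.cong) auto
    then show ?thesis using fin iI by simp
  qed
  define q where "q t = (g (z(i:=t)) - g z - c * (t - z i)) / \<bar>t - z i\<bar>" for t
  have q0: "(q \<longlongrightarrow> 0) (at (z i) within T)"
    using filterlim_compose[OF L filt] unfolding q_def s1 s2 by simp
  have "((\<lambda>t. (g (z(i:=t)) - g (z(i:=z i))) / (t - z i) - c) \<longlongrightarrow> 0) (at (z i) within T)"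
  proof (rule Lim_null_comparison)
    show "\<forall>\<^sub>F t in at (z i) within T. norm ((g (z(i:=t)) - g (z(i:=z i))) / (t - z i) - c) \<le> \<bar>q t\<bar>"
      unfolding eventually_at_filter
    proof (intro always_eventually allI impI)
      fix t assume "t \<noteq> z i"
      then have "(g (z(i:=t)) - g (z(i:=z i))) / (t - z i) - c = (g (z(i:=t)) - g z - c * (t - z i)) / (t - z i)"
        by (simp add: field_simps)
      then show "norm ((g (z(i:=t)) - g (z(i:=z i))) / (t - z i) - c) \<le> \<bar>q t\<bar>"
        by (simp add: q_def abs_divide)
    qed
    show "((\<lambda>t. \<bar>q t\<bar>) \<longlongrightarrow> 0) (at (z i) within T)"
      using tendsto_rabs_zero[OF q0] .
  qed
  then have "((\<lambda>t. (g (z(i:=t)) - g (z(i:=z i))) / (t - z i)) \<longlongrightarrow> c) (at (z i) within T)"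
    by (simp add: LIM_zero_iff)
  then show ?thesis by (auto simp: has_field_derivative_iff)
qed

lemma mono1:
  fixes \<phi> :: "real \<Rightarrow> real" and Ce :: ereal
  defines "T \<equiv> {t. 0 \<le> t \<and> ereal t < Ce}"
  assumes ex: "\<forall>t\<in>T. \<exists>c. (\<phi> has_real_derivative c) (at t within T)"
    and nn: "\<forall>t\<in>T. \<forall>D. (\<phi> has_real_derivative D) (at t within T) \<longrightarrow> 0 \<le> D"
    and ab: "0 \<le> a" "a \<le> b" "ereal b < Ce"
  shows "\<phi> a \<le> \<phi> b"
proof -
  have inT: "s \<in> T" if "0 \<le> s" "s \<le> b" for s
  proof -
    have "ereal s \<le> ereal b" using that by simp
    then have "ereal s < Ce" using ab(3) by (rule order.strict_trans1)
    then show ?thesis unfolding T_def using that by simp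
  qed
  have abT: "{a..b} \<subseteq> T" using inT ab by auto
  show ?thesis
  proof (rule DERIV_nonneg_imp_increasing_open[OF ab(2)])
    fix t assume t: "a < t" "t < b"
    have "{0<..<b} \<subseteq> T" using inT by auto
    moreover have "t \<in> {0<..<b}" using t ab by auto
    ultimately have "t \<in> interior T" by (meson interior_maximal open_greaterThanLessThan subsetD)
    then have atT: "at t within T = at t" by (rule at_within_interior)
    have "t \<in> T" using abT t by auto
    then obtain c where "(\<phi> has_real_derivative c) (at t within T)" using ex by blast
    moreover then have "0 \<le> c" using nn \<open>t \<in> T\<close> by blast
    ultimately show "\<exists>y. (\<phi> has_real_derivative y) (at t) \<and> 0 \<le> y" using atT by auto
  next
    show "continuous_on {a..b} \<phi>"
      unfolding continuous_on_eq_continuous_within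
    proof
      fix t assume "t \<in> {a..b}"
      then have "t \<in> T" using abT by auto
      then obtain c where "(\<phi> has_real_derivative c) (at t within T)" using ex by blast
      then have "continuous (at t within T) \<phi>" by (rule DERIV_continuous)
      then show "continuous (at t within {a..b}) \<phi>" using abT continuous_within_subset by blast
    qed
  qed
qed

lemma mono_multi:
  fixes g :: "'a \<Rightarrow> ('a \<Rightarrow> real) \<Rightarrow> real"
  assumes finO: "finite Os"
    and Fdef: "\<forall>x\<in>F. \<forall>l. l \<notin> Os \<longrightarrow> x l = 0"
    and Fupd: "\<forall>x\<in>F. \<forall>x'\<in>F. \<forall>e\<in>Os. x(e := x' e) \<in> F"
    and step: "\<forall>x\<in>F. \<forall>e\<in>Os. \<forall>j\<in>Os. j \<noteq> e \<longrightarrow> (\<forall>x'\<in>F. x e \<le> x' e \<longrightarrow> g j x \<le> g j (x(e := x' e)))"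
  shows "x \<in> F \<Longrightarrow> x' \<in> F \<Longrightarrow> \<forall>l. x l \<le> x' l \<Longrightarrow> j \<in> Os \<Longrightarrow> x j = x' j \<Longrightarrow> g j x \<le> g j x'"
proof (induction "card {e\<in>Os. x e \<noteq> x' e}" arbitrary: x rule: less_induct)
  case less
  show ?case
  proof (cases "{e\<in>Os. x e \<noteq> x' e} = {}")
    case True
    have "x = x'"
    proof
      fix l show "x l = x' l" using True Fdef less.prems(1,2) by (cases "l \<in> Os") (auto, metis)
    qed
    then show ?thesis by simp
  next
    case False
    then obtain e where e: "e \<in> Os" "x e \<noteq> x' e" by blast
    define x'' where "x'' = x(e := x' e)"
    have x''F: "x'' \<in> F" using Fupd less.prems e unfolding x''_def by blast
    have "{e\<in>Os. x'' e \<noteq> x' e} \<subset> {e\<in>Os. x e \<noteq> x' e}" using e unfolding x''_def by auto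
    then have cl: "card {e\<in>Os. x'' e \<noteq> x' e} < card {e\<in>Os. x e \<noteq> x' e}"
      using finO by (simp add: psubset_card_mono)
    have "j \<noteq> e" using e less.prems by auto
    then have "g j x \<le> g j x''" using step less.prems e unfolding x''_def by auto
    also have "g j x'' \<le> g j x'"
      using less.hyps[OF cl x''F less.prems(2)] less.prems e \<open>j \<noteq> e\<close> unfolding x''_def by auto
    finally show ?thesis .
  qed
qed

lemma key:
  fixes g :: "'a \<Rightarrow> ('a \<Rightarrow> real) \<Rightarrow> real"
  assumes finO: "finite Os"
    and simplex: "\<forall>x\<in>F. (\<Sum>e\<in>Os. g e x) = 1"
    and mono: "\<And>x x' j. x \<in> F \<Longrightarrow> x' \<in> F \<Longrightarrow> \<forall>l. x l \<le> x' l \<Longrightarrow> j \<in> Os \<Longrightarrow> x j = x' j \<Longrightarrow> g j x \<le> g j x'"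
    and maxF: "\<forall>x\<in>F. \<forall>y\<in>F. (\<lambda>l. max (x l) (y l)) \<in> F"
    and minF: "\<forall>x\<in>F. \<forall>y\<in>F. (\<lambda>l. min (x l) (y l)) \<in> F"
    and xF: "x \<in> F" and yF: "y \<in> F"
  shows "(\<Sum>e\<in>Os. sgn (x e - y e) * (g e x - g e y)) \<le> 0"
proof -
  define P where "P = {e\<in>Os. x e > y e}"
  define M where "M = {e\<in>Os. x e < y e}"
  define Z where "Z = {e\<in>Os. x e = y e}"
  have finP: "finite P" "finite M" "finite Z" using finO unfolding P_def M_def Z_def by auto
  have dec: "Os = P \<union> M \<union> Z" unfolding P_def M_def Z_def by auto
  have dj: "P \<inter> M = {}" "P \<inter> Z = {}" "M \<inter> Z = {}" unfolding P_def M_def Z_def by auto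
  have "(\<Sum>e\<in>Os. sgn (x e - y e) * (g e x - g e y))
      = (\<Sum>e\<in>P. sgn (x e - y e) * (g e x - g e y)) + (\<Sum>e\<in>M. sgn (x e - y e) * (g e x - g e y))
        + (\<Sum>e\<in>Z. sgn (x e - y e) * (g e x - g e y))"
    unfolding dec using finP dj by (simp add: sum.union_disjoint Int_Un_distrib2)
  also have "\<dots> = (\<Sum>e\<in>P. g e x - g e y) - (\<Sum>e\<in>M. g e x - g e y)"
    unfolding P_def M_def Z_def by (simp add: sum_subtractf)
  also have "\<dots> = ((\<Sum>e\<in>P. g e x) - (\<Sum>e\<in>P. g e y)) - ((\<Sum>e\<in>M. g e x) - (\<Sum>e\<in>M. g e y))"
    by (simp add: sum_subtractf)
  also have "\<dots> \<le> 0"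
  proof -
    define zM where "zM = (\<lambda>l. max (x l) (y l))"
    define zm where "zm = (\<lambda>l. min (x l) (y l))"
    have zMF: "zM \<in> F" and zmF: "zm \<in> F" using maxF minF xF yF unfolding zM_def zm_def by auto
    have PO: "P \<subseteq> Os" "M \<subseteq> Os" unfolding P_def M_def by auto
    have s1: "(\<Sum>e\<in>P. g e x) \<le> (\<Sum>e\<in>P. g e zM)"
      by (rule sum_mono, rule mono[OF xF zMF]) (auto simp: zM_def P_def)
    have sp: "(\<Sum>e\<in>P. g e z) = 1 - (\<Sum>e\<in>Os - P. g e z)" if "z \<in> F" for z
      using simplex that sum.subset_diff[OF PO(1) finO, of "\<lambda>e. g e z"] by auto
    have s2: "(\<Sum>e\<in>Os - P. g e y) \<le> (\<Sum>e\<in>Os - P. g e zM)"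
      by (rule sum_mono, rule mono[OF yF zMF]) (auto simp: zM_def P_def)
    have s3: "(\<Sum>e\<in>M. g e zm) \<le> (\<Sum>e\<in>M. g e x)"
      by (rule sum_mono, rule mono[OF zmF xF]) (auto simp: zm_def M_def)
    have sm: "(\<Sum>e\<in>M. g e z) = 1 - (\<Sum>e\<in>Os - M. g e z)" if "z \<in> F" for z
      using simplex that sum.subset_diff[OF PO(2) finO, of "\<lambda>e. g e z"] by auto
    have s4: "(\<Sum>e\<in>Os - M. g e zm) \<le> (\<Sum>e\<in>Os - M. g e y)"
      by (rule sum_mono, rule mono[OF zmF yF]) (auto simp: zm_def M_def)
    show ?thesis using s1 s2 s3 s4 sp[OF yF] sp[OF zMF] sm[OF yF] sm[OF zmF] by linarith
  qed
  finally show ?thesis .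
qed

theorem lemma2:
  fixes E :: "link set" and n :: nat and C :: "link \<Rightarrow> ereal"
    and G :: "nat \<Rightarrow> (link \<Rightarrow> real) \<Rightarrow> (path \<Rightarrow> real) \<Rightarrow> link \<Rightarrow> real"
    and v :: nat and \<pi> :: "path \<Rightarrow> real" and f :: "link \<Rightarrow> real"
  assumes finE: "finite E"
    and E_nodes: "E \<subseteq> {0..n} \<times> {0..n}"
    and E_order: "\<forall>(a, b)\<in>E. a < b"
    and source: "\<forall>w\<in>{0..n}. in_links E w = {} \<longleftrightarrow> w = 0"
    and sink: "\<forall>w\<in>{0..n}. out_links E w = {} \<longleftrightarrow> w = n"
    and reach: "\<forall>w\<in>{0..n}. (w, n) \<in> E\<^sup>*"
    and cap_pos: "\<forall>e\<in>E. 0 < C e"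
    and G_simplex: "\<forall>w<n. \<forall>x\<in>flows_on (out_links E w) C. \<forall>\<rho>\<in>Pi_set E n C.
         (\<forall>e\<in>out_links E w. 0 \<le> G w x \<rho> e) \<and> (\<Sum>e\<in>out_links E w. G w x \<rho> e) = 1"
    and G_C1: "\<forall>w<n. \<forall>e\<in>out_links E w.
         C1_on (Inl ` out_links E w \<union> Inr ` paths E n)
           {z. (\<lambda>l. z (Inl l)) \<in> flows_on (out_links E w) C \<and> (\<lambda>p. z (Inr p)) \<in> Pi_set E n C}
           (\<lambda>z. G w (\<lambda>l. z (Inl l)) (\<lambda>p. z (Inr p)) e)"
    and G_consistent: "\<forall>w<n. \<forall>\<rho>\<in>Pi_set E n C. \<forall>e\<in>out_links E w.
         (\<Sum>j\<in>out_links E w. fpi E n \<rho> j) * G w (restr (out_links E w) (fpi E n \<rho>)) \<rho> e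
           = fpi E n \<rho> e"
    and G_cooperative: "\<forall>w<n. \<forall>\<rho>\<in>Pi_set E n C. \<forall>x\<in>flows_on (out_links E w) C.
         \<forall>j\<in>out_links E w. \<forall>e\<in>out_links E w. j \<noteq> e \<longrightarrow>
         (\<forall>D. ((\<lambda>t. G w (x(e := t)) \<rho> j) has_real_derivative D)
                 (at (x e) within {t. 0 \<le> t \<and> ereal t < C e}) \<longrightarrow> 0 \<le> D)"
    and v_range: "v < n"
    and pi_in: "\<pi> \<in> Pi_set E n C"
    and f_in: "f \<in> F_set E C"
  shows "(\<Sum>e\<in>out_links E v. sgn (f e - fpi E n \<pi> e) * H E G f \<pi> e)
           \<le> - Vplus E n v f \<pi> + Vminus E n v f \<pi>"
proof -
  define Os where "Os = out_links E v"
  define F where "F = flows_on Os C"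
  define g where "g = (\<lambda>e x. G v x \<pi> e)"
  define T where "T = (\<lambda>e. {t. 0 \<le> t \<and> ereal t < C e})"
  have finOs: "finite Os" unfolding Os_def out_links_def using finE by simp
  have OsE: "Os \<subseteq> E" unfolding Os_def out_links_def by auto
  have pi_sum: "sum \<pi> (paths E n) = 1" and pi_nn: "\<forall>p\<in>paths E n. 0 \<le> \<pi> p"
    and pi_cap: "\<forall>e\<in>E. ereal (fpi E n \<pi> e) < C e"
    using pi_in unfolding Pi_set_def by auto
  have finP: "finite (paths E n)" using pi_sum by (metis sum.infinite zero_neq_one)
  have fpi_nn: "0 \<le> fpi E n \<pi> e" for e
    unfolding fpi_def using pi_nn by (auto intro: sum_nonneg)
  have simplex: "\<forall>x\<in>F. (\<Sum>e\<in>Os. g e x) = 1" and gnn: "\<forall>x\<in>F. \<forall>e\<in>Os. 0 \<le> g e x"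
    using G_simplex v_range pi_in unfolding F_def Os_def g_def by auto
  have deriv_ex: "\<exists>c. ((\<lambda>s. G v (x(e:=s)) \<pi> j) has_real_derivative c) (at t within T e)"
    if xF: "x \<in> F" and eO: "e \<in> Os" and jO: "j \<in> Os" and tT: "t \<in> T e" for x e j t
  proof -
    define I where "I = Inl ` Os \<union> Inr ` paths E n"
    define S where "S = {z. (\<lambda>l. z (Inl l)) \<in> flows_on Os C \<and> (\<lambda>p. z (Inr p)) \<in> Pi_set E n C}"
    define g0 where "g0 = (\<lambda>z. G v (\<lambda>l. z (Inl l)) (\<lambda>p. z (Inr p)) j)"
    define zt where "zt = (\<lambda>k. case k of Inl l \<Rightarrow> (x(e:=t)) l | Inr p \<Rightarrow> \<pi> p)"
    have C1: "C1_on I S g0" using G_C1 v_range jO unfolding I_def S_def g0_def Os_def by auto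
    have updF: "x(e:=s) \<in> F" if "s \<in> T e" for s
      using xF eO that unfolding F_def flows_on_def T_def by auto
    have e1: "(\<lambda>l. (zt(Inl e := s)) (Inl l)) = x(e:=s)" for s
      by (rule ext) (auto simp: zt_def)
    have e2: "(\<lambda>p. (zt(Inl e := s)) (Inr p)) = \<pi>" for s
      by (rule ext) (auto simp: zt_def)
    have TS: "\<forall>s\<in>T e. zt(Inl e := s) \<in> S"
      unfolding S_def using e1 e2 updF pi_in F_def by auto
    have ztS: "zt \<in> S"
    proof -
      have "zt = zt(Inl e := t)" by (rule ext) (auto simp: zt_def)
      moreover have "zt(Inl e := t) \<in> S" using TS tT by blast
      ultimately show ?thesis by simp
    qed
    have "\<exists>c. ((\<lambda>s. g0 (zt(Inl e:=s))) has_real_derivative c) (at (zt (Inl e)) within T e)"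
      by (rule C1_line_deriv[OF C1[unfolded C1_on_def] _ ztS _ TS])
        (use finOs finP eO in \<open>auto simp: I_def\<close>)
    moreover have "(\<lambda>s. g0 (zt(Inl e:=s))) = (\<lambda>s. G v (x(e:=s)) \<pi> j)"
      unfolding g0_def e1 e2 ..
    moreover have "zt (Inl e) = t" by (simp add: zt_def)
    ultimately show ?thesis by simp
  qed
  have step: "\<forall>x\<in>F. \<forall>e\<in>Os. \<forall>j\<in>Os. j \<noteq> e \<longrightarrow> (\<forall>x'\<in>F. x e \<le> x' e \<longrightarrow> g j x \<le> g j (x(e := x' e)))"
  proof (intro ballI impI allI)
    fix x e j x' assume xF: "x \<in> F" and eO: "e \<in> Os" and jO: "j \<in> Os" and je: "j \<noteq> e"
      and x'F: "x' \<in> F" and le: "x e \<le> x' e"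
    have a0: "0 \<le> x e" and bC: "ereal (x' e) < C e"
      using xF x'F eO unfolding F_def flows_on_def by auto
    have "(\<lambda>s. G v (x(e:=s)) \<pi> j) (x e) \<le> (\<lambda>s. G v (x(e:=s)) \<pi> j) (x' e)"
    proof (rule mono1[where Ce = "C e", OF _ _ a0 le bC])
      show "\<forall>t\<in>{t. 0 \<le> t \<and> ereal t < C e}. \<exists>c. ((\<lambda>s. G v (x(e:=s)) \<pi> j) has_real_derivative c)
          (at t within {t. 0 \<le> t \<and> ereal t < C e})"
        using deriv_ex[OF xF eO jO] unfolding T_def by auto
      show "\<forall>t\<in>{t. 0 \<le> t \<and> ereal t < C e}. \<forall>D. ((\<lambda>s. G v (x(e:=s)) \<pi> j) has_real_derivative D)
          (at t within {t. 0 \<le> t \<and> ereal t < C e}) \<longrightarrow> 0 \<le> D"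
      proof (intro ballI allI impI)
        fix t D assume tT: "t \<in> {t. 0 \<le> t \<and> ereal t < C e}"
          and d: "((\<lambda>s. G v (x(e:=s)) \<pi> j) has_real_derivative D) (at t within {t. 0 \<le> t \<and> ereal t < C e})"
        have xtF: "x(e:=t) \<in> flows_on (out_links E v) C"
          using xF eO tT unfolding F_def flows_on_def Os_def by auto
        have "((\<lambda>s. G v ((x(e:=t))(e:=s)) \<pi> j) has_real_derivative D)
            (at ((x(e:=t)) e) within {t. 0 \<le> t \<and> ereal t < C e})"
          using d by simp
        then show "0 \<le> D"
          using G_cooperative v_range pi_in xtF jO eO je unfolding Os_def by blast
      qed
    qed
    then show "g j x \<le> g j (x(e := x' e))" unfolding g_def by simp
  qed
  have Fdef: "\<forall>x\<in>F. \<forall>l. l \<notin> Os \<longrightarrow> x l = 0" unfolding F_def flows_on_def by auto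
  have Fupd: "\<forall>x\<in>F. \<forall>x'\<in>F. \<forall>e\<in>Os. x(e := x' e) \<in> F" unfolding F_def flows_on_def by auto
  have maxF: "\<forall>x\<in>F. \<forall>y\<in>F. (\<lambda>l. max (x l) (y l)) \<in> F"
    unfolding F_def flows_on_def by (auto simp: max_def)
  have minF: "\<forall>x\<in>F. \<forall>y\<in>F. (\<lambda>l. min (x l) (y l)) \<in> F"
    unfolding F_def flows_on_def by (auto simp: min_def)
  define xf where "xf = restr Os f"
  define yf where "yf = restr Os (fpi E n \<pi>)"
  have xfF: "xf \<in> F" using f_in OsE unfolding xf_def F_def flows_on_def F_set_def restr_def by auto
  have yfF: "yf \<in> F" using pi_cap fpi_nn OsE unfolding yf_def F_def flows_on_def restr_def by auto
  have keyineq: "(\<Sum>e\<in>Os. sgn (xf e - yf e) * (g e xf - g e yf)) \<le> 0"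
    by (rule key[OF finOs simplex mono_multi[OF finOs Fdef Fupd step] maxF minF xfF yfF])
  define lp where "lp = (\<Sum>e\<in>Os. fpi E n \<pi> e)"
  define lm where "lm = (if v = 0 then 1 else (\<Sum>j\<in>in_links E v. f j))"
  have lp_nn: "0 \<le> lp" unfolding lp_def using fpi_nn by (auto intro: sum_nonneg)
  have cons: "fpi E n \<pi> e = lp * g e yf" if "e \<in> Os" for e
    using G_consistent v_range pi_in that unfolding lp_def g_def yf_def Os_def by auto
  have Hform: "H E G f \<pi> e = lm * g e xf - f e" if "e \<in> Os" for e
    using that unfolding H_def lm_def g_def xf_def Os_def out_links_def by (auto simp: Let_def)
  have lp0: "lp = 1" if v0: "v = 0"
  proof -
    have one: "{e \<in> Os. e \<in> set p} = {hd p}" if pP: "p \<in> paths E n" for p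
    proof -
      have ip: "p \<noteq> []" "set p \<subseteq> E" "fst (hd p) = 0"
        "\<forall>i. Suc i < length p \<longrightarrow> snd (p ! i) = fst (p ! Suc i)"
        using pP unfolding paths_def is_path_def by auto
      have A: "hd p \<in> Os" using ip v0 hd_in_set[OF ip(1)] unfolding Os_def out_links_def by auto
      have B: "e = hd p" if "e \<in> Os" "e \<in> set p" for e
      proof -
        obtain i where i: "i < length p" "e = p ! i" using \<open>e \<in> set p\<close> by (metis in_set_conv_nth)
        show ?thesis
        proof (cases i)
          case 0 then show ?thesis using i ip(1) by (simp add: hd_conv_nth)
        next
          case (Suc k)
          have "p ! k \<in> E" using ip(2) i Suc by auto
          then have "fst (p ! k) < snd (p ! k)" using E_order by (cases "p ! k") auto
          moreover have "snd (p ! k) = fst (p ! Suc k)" using ip(4) i(1) Suc by blast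
          ultimately have "0 < fst e" using i(2) Suc by simp
          then show ?thesis using that v0 unfolding Os_def out_links_def by auto
        qed
      qed
      show ?thesis
      proof (intro equalityI subsetI)
        fix e assume "e \<in> {e \<in> Os. e \<in> set p}"
        then show "e \<in> {hd p}" using B by simp
      next
        fix e assume "e \<in> {hd p}"
        then show "e \<in> {e \<in> Os. e \<in> set p}" using A hd_in_set[OF ip(1)] by simp
      qed
    qed
    have "lp = (\<Sum>e\<in>Os. \<Sum>p\<in>{p \<in> paths E n. e \<in> set p}. \<pi> p)" unfolding lp_def fpi_def ..
    also have "\<dots> = (\<Sum>p\<in>paths E n. \<Sum>e\<in>{e \<in> Os. e \<in> set p}. \<pi> p)"
      by (rule sum.swap_restrict[OF finOs finP])
    also have "\<dots> = (\<Sum>p\<in>paths E n. \<pi> p)" using one by simp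
    finally show ?thesis using pi_sum by simp
  qed
  have Vm: "Vminus E n v f \<pi> = \<bar>lp - lm\<bar>"
    unfolding Vminus_def lm_def lp_def[symmetric] Os_def[symmetric] using lp0 by auto
  have Vp: "Vplus E n v f \<pi> = (\<Sum>e\<in>Os. \<bar>f e - fpi E n \<pi> e\<bar>)"
    unfolding Vplus_def Os_def ..
  have pw: "sgn (f e - fpi E n \<pi> e) * H E G f \<pi> e
      = (lm - lp) * sgn (xf e - yf e) * g e xf + lp * (sgn (xf e - yf e) * (g e xf - g e yf))
        - \<bar>f e - fpi E n \<pi> e\<bar>" if "e \<in> Os" for e
  proof -
    have d: "xf e - yf e = f e - fpi E n \<pi> e" using that unfolding xf_def yf_def restr_def by simp
    have "sgn (f e - fpi E n \<pi> e) * (f e - fpi E n \<pi> e) = \<bar>f e - fpi E n \<pi> e\<bar>"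
      by (simp add: abs_if sgn_real_def)
    then show ?thesis unfolding Hform[OF that] d using cons[OF that]
      by (simp add: algebra_simps)
  qed
  have b1: "(lm - lp) * sgn (xf e - yf e) * g e xf \<le> \<bar>lp - lm\<bar> * g e xf" if "e \<in> Os" for e
  proof -
    have "0 \<le> g e xf" using gnn xfF that by auto
    moreover have "(lm - lp) * sgn (xf e - yf e) \<le> \<bar>lp - lm\<bar>"
      by (auto simp: sgn_real_def abs_if)
    ultimately show ?thesis by (simp add: mult_right_mono)
  qed
  have "(\<Sum>e\<in>Os. sgn (f e - fpi E n \<pi> e) * H E G f \<pi> e)
      = (\<Sum>e\<in>Os. (lm - lp) * sgn (xf e - yf e) * g e xf)
        + lp * (\<Sum>e\<in>Os. sgn (xf e - yf e) * (g e xf - g e yf))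
        - (\<Sum>e\<in>Os. \<bar>f e - fpi E n \<pi> e\<bar>)"
    by (simp add: pw sum.distrib sum_subtractf sum_distrib_left)
  also have "\<dots> \<le> \<bar>lp - lm\<bar> * (\<Sum>e\<in>Os. g e xf) + 0 - (\<Sum>e\<in>Os. \<bar>f e - fpi E n \<pi> e\<bar>)"
  proof -
    have "(\<Sum>e\<in>Os. (lm - lp) * sgn (xf e - yf e) * g e xf) \<le> (\<Sum>e\<in>Os. \<bar>lp - lm\<bar> * g e xf)"
      by (rule sum_mono) (rule b1)
    moreover have "lp * (\<Sum>e\<in>Os. sgn (xf e - yf e) * (g e xf - g e yf)) \<le> 0"
      using lp_nn keyineq by (simp add: mult_nonneg_nonpos)
    ultimately show ?thesis by (simp add: sum_distrib_left)
  qed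
  also have "\<dots> = - Vplus E n v f \<pi> + Vminus E n v f \<pi>"
    using simplex xfF Vm Vp by simp
  finally show ?thesis unfolding Os_def .
qed

end
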